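(* Let $K=(\mathbf{k}_1,\dots,\mathbf{k}_6)\in(\mathbb{R}^2)^6$ be a 3-RPR configuration whose base anchor points $\mathbf{k}_1,\mathbf{k}_2,\mathbf{k}_3\in\mathbb{R}^2$ are fixed and whose platform anchor points are $\mathbf{k}_j=\mathbf{R}\mathbf{p}_j+\mathbf{t}$ ($j=4,5,6$) for fixed $\mathbf{p}_4,\mathbf{p}_5,\mathbf{p}_6\in\mathbb{R}^2$ and a pose $(\mathbf{R},\mathbf{t})$ with $\mathbf{R}\in SO(2)$, $\mathbf{t}\in\mathbb{R}^2$. Let $D$ be either $D^{\vartriangle}_{\blacktriangle}$ or $D^{\vartriangle}_{\vartriangle}$. If $K'=(\mathbf{k}'_1,\dots,\mathbf{k}'_6)$ is a closest configuration to $K$ on the collinearity variety $C_P=0$, i.e. a global minimizer of $D(K,K')$ over all $K'\in\mathbb{R}^{12}$ with $C_P(K')=0$, then $\mathbf{k}'_4,\mathbf{k}'_5,\mathbf{k}'_6$ are the pedal points (orthogonal projections) of $\mathbf{k}_4,\mathbf{k}_5,\mathbf{k}_6$ on the line of regression of $\mathbf{k}_4,\mathbf{k}_5,\mathbf{k}_6$. Moreover, the distance $\min\{D(K,K'):C_P(K')=0\}$ depends only on the geometry of the manipulator, i.e. it is independent of the pose $(\mathbf{R},\mathbf{t})$.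
   Context: A configuration is $K'=(\mathbf{k}'_1,\dots,\mathbf{k}'_6)$ with $\mathbf{k}'_i=(c_i,d_i)^T\in\mathbb{R}^2$, viewed as a point of $\mathbb{R}^{12}$. For indices $i,j$ define the segment distance $d(\vert_{ij},\vert'_{ij})^2=\frac13\big[\|\mathbf{k}_i-\mathbf{k}'_i\|^2+\|\mathbf{k}_j-\mathbf{k}'_j\|^2+(\mathbf{k}_i-\mathbf{k}'_i)^T(\mathbf{k}_j-\mathbf{k}'_j)\big]$ and for $\{i,j,k\}$ the triangle distance $d(\blacktriangle_{ijk},\blacktriangle'_{ijk})^2=\frac16\big[\sum_{x=i,j,k}\|\mathbf{k}_x-\mathbf{k}'_x\|^2+(\mathbf{k}_i-\mathbf{k}'_i)^T(\mathbf{k}_k-\mathbf{k}'_k)+(\mathbf{k}_i-\mathbf{k}'_i)^T(\mathbf{k}_j-\mathbf{k}'_j)+(\mathbf{k}_k-\mathbf{k}'_k)^T(\mathbf{k}_j-\mathbf{k}'_j)\big]$. Then $D^{\vartriangle}_{\blacktriangle}(K,K')^2=\frac17\big[\sum_{(i,j)\in I_2}d(\vert_{ij},\vert'_{ij})^2+d(\blacktriangle_{123},\blacktriangle'_{123})^2\big]$ with $I_2=\{(1,4),(2,5),(3,6),(4,5),(4,6),(5,6)\}$, and $D^{\vartriangle}_{\vartriangle}(K,K')^2=\frac19\sum_{(i,j)\in I_4}d(\vert_{ij},\vert'_{ij})^2$ with $I_4=\{(1,2),(2,3),(1,3),(1,4),(2,5),(3,6),(4,5),(5,6),(4,6)\}$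 (distances are the nonnegative square roots). The collinearity polynomial of the platform is $C_P(K')=\det\begin{pmatrix}1&1&1\\ c_4&c_5&c_6\\ d_4&d_5&d_6\end{pmatrix}$. The line of regression of three points is the line minimizing the sum of squared orthogonal distances to these points; the pedal point of a point on a line is its orthogonal projection onto that line. *)

theory Defs
  imports "HOL-Analysis.Analysis"
begin

text \<open>A configuration K = (k_1,...,k_6) is a map from indices to points of the plane;
  only the indices 1..6 are relevant. Coordinates: k = (c,d) with c = k$1, d = k$2.\<close>
type_synonym config = "nat \<Rightarrow> real^2"

definition seg_dist :: "config \<Rightarrow> config \<Rightarrow> nat \<Rightarrow> nat \<Rightarrow> real" where
  "seg_dist K K' i j = sqrt ((1/3) * (norm (K i - K' i)^2 + norm (K j - K' j)^2
      + (K i - K' i) \<bullet> (K j - K' j)))"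

definition tri_dist :: "config \<Rightarrow> config \<Rightarrow> nat \<Rightarrow> nat \<Rightarrow> nat \<Rightarrow> real" where
  "tri_dist K K' i j k = sqrt ((1/6) * (norm (K i - K' i)^2 + norm (K j - K' j)^2 + norm (K k - K' k)^2
      + (K i - K' i) \<bullet> (K k - K' k) + (K i - K' i) \<bullet> (K j - K' j) + (K k - K' k) \<bullet> (K j - K' j)))"

definition I2 :: "(nat \<times> nat) set" where
  "I2 = {(1,4),(2,5),(3,6),(4,5),(4,6),(5,6)}"

definition I4 :: "(nat \<times> nat) set" where
  "I4 = {(1,2),(2,3),(1,3),(1,4),(2,5),(3,6),(4,5),(5,6),(4,6)}"

definition D_tri_full :: "config \<Rightarrow> config \<Rightarrow> real" where
  "D_tri_full K K' = sqrt ((1/7) * ((\<Sum>(i,j)\<in>I2. (seg_dist K K' i j)^2) + (tri_dist K K' 1 2 3)^2))"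

definition D_tri_tri :: "config \<Rightarrow> config \<Rightarrow> real" where
  "D_tri_tri K K' = sqrt ((1/9) * (\<Sum>(i,j)\<in>I4. (seg_dist K K' i j)^2))"

text \<open>Collinearity polynomial of the platform: det [[1,1,1],[c4,c5,c6],[d4,d5,d6]].\<close>
definition C_P :: "config \<Rightarrow> real" where
  "C_P K = (K 5 $ 1 * K 6 $ 2 - K 6 $ 1 * K 5 $ 2)
         - (K 4 $ 1 * K 6 $ 2 - K 6 $ 1 * K 4 $ 2)
         + (K 4 $ 1 * K 5 $ 2 - K 5 $ 1 * K 4 $ 2)"

definition SO2 :: "(real^2^2) set" where
  "SO2 = {R. orthogonal_matrix R \<and> det R = 1}"

definition pose_config :: "config \<Rightarrow> config \<Rightarrow> real^2^2 \<Rightarrow> real^2 \<Rightarrow> config" where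
  "pose_config b p R t = (\<lambda>i. if i \<le> 3 then b i else R *v p i + t)"

definition is_line :: "(real^2) set \<Rightarrow> bool" where
  "is_line L \<longleftrightarrow> (\<exists>a u. u \<noteq> 0 \<and> L = {a + s *\<^sub>R u | s. True})"

definition regression_line :: "config \<Rightarrow> (real^2) set \<Rightarrow> bool" where
  "regression_line K L \<longleftrightarrow> is_line L \<and>
     (\<forall>L'. is_line L' \<longrightarrow> (\<Sum>j\<in>{4,5,6}. (infdist (K j) L)^2) \<le> (\<Sum>j\<in>{4,5,6}. (infdist (K j) L')^2))"

definition pedal_point :: "real^2 \<Rightarrow> (real^2) set \<Rightarrow> real^2 \<Rightarrow> bool" where
  "pedal_point x L q \<longleftrightarrow> q \<in> L \<and> (\<forall>y\<in>L. (x - q) \<bullet> (y - q) = 0)"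

end

theory Submission
  imports Defs
begin


lemma nsq2: "(norm (v::real^2))^2 = (v$1)^2 + (v$2)^2"
  unfolding power2_norm_eq_inner by (simp add: inner_vec_def sum_2 power2_eq_square)
lemma inn2: "inner (v::real^2) w = v$1*w$1 + v$2*w$2"
  by (simp add: inner_vec_def sum_2)

lemma collinear_CP:
  assumes "K 4 = c + s4 *\<^sub>R u" "K 5 = c + s5 *\<^sub>R u" "K 6 = c + s6 *\<^sub>R u"
  shows "C_P K = 0"
  unfolding C_P_def assms by (simp add: algebra_simps)

lemma CP_line:
  assumes "C_P K = 0"
  shows "\<exists>c u. u \<noteq> 0 \<and> (\<forall>j\<in>{4,5,6::nat}. K j \<in> {c + s *\<^sub>R u | s. True})"
proof -
  have cp: "(K 5 $ 1 - K 4 $ 1) * (K 6 $ 2 - K 4 $ 2) - (K 6 $ 1 - K 4 $ 1) * (K 5 $ 2 - K 4 $ 2) = 0"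
    using assms unfolding C_P_def by (simp add: algebra_simps)
  show ?thesis
  proof (cases "K 5 = K 4")
    case False
    define u where "u = K 5 - K 4"
    define w where "w = K 6 - K 4"
    have u0: "u \<noteq> 0" using False u_def by simp
    have uu: "u$1*u$1 + u$2*u$2 \<noteq> 0"
    proof
      assume "u$1*u$1 + u$2*u$2 = 0"
      then have "u$1 = 0" "u$2 = 0" by (auto simp: add_nonneg_eq_0_iff)
      then have "u = 0" by (simp add: vec_eq_iff forall_2)
      then show False using u0 by simp
    qed
    have cr: "u$1 * w$2 - w$1 * u$2 = 0" using cp by (simp add: u_def w_def)
    define s where "s = (w$1*u$1 + w$2*u$2) / (u$1*u$1 + u$2*u$2)"
    have "w = s *\<^sub>R u"
    proof -
      have "w$1 * (u$1*u$1 + u$2*u$2) = (w$1*u$1 + w$2*u$2) * u$1"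
        using cr by (simp add: algebra_simps)
      moreover have "w$2 * (u$1*u$1 + u$2*u$2) = (w$1*u$1 + w$2*u$2) * u$2"
        using cr by (simp add: algebra_simps)
      ultimately show ?thesis using uu unfolding s_def
        by (simp add: vec_eq_iff forall_2 field_simps)
    qed
    then have "K 6 = K 4 + s *\<^sub>R u" using w_def by (simp add: algebra_simps)
    moreover have "K 5 = K 4 + 1 *\<^sub>R u" "K 4 = K 4 + 0 *\<^sub>R u" using u_def by auto
    ultimately show ?thesis using u0 by blast
  next
    case True
    show ?thesis
    proof (cases "K 6 = K 4")
      case False
      define u where "u = K 6 - K 4"
      have "u \<noteq> 0" using False u_def by simp
      moreover have "K 6 = K 4 + 1 *\<^sub>R u" "K 4 = K 4 + 0 *\<^sub>R u" "K 5 = K 4 + 0 *\<^sub>R u" using u_def True by auto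
      ultimately show ?thesis by blast
    next
      case T2: True
      have "(axis 1 1 :: real^2) \<noteq> 0" by (simp add: vec_eq_iff axis_def)
      moreover have "K 4 = K 4 + 0 *\<^sub>R axis 1 1" "K 5 = K 4 + 0 *\<^sub>R axis 1 1" "K 6 = K 4 + 0 *\<^sub>R axis 1 1"
        using True T2 by auto
      ultimately show ?thesis by blast
    qed
  qed
qed

lemma in_line: "c + s *\<^sub>R u \<in> {c + s *\<^sub>R u | s. True}"
  by auto

lemma proj_line:
  fixes x c u :: "real^2"
  assumes u: "u \<noteq> 0"
  defines "p \<equiv> c + ((inner (x - c) u) / inner u u) *\<^sub>R u"
  shows "p \<in> {c + s *\<^sub>R u | s. True}" and "norm (x - p) \<le> infdist x {c + s *\<^sub>R u | s. True}"
proof -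
  show "p \<in> {c + s *\<^sub>R u | s. True}" unfolding p_def by (rule in_line)
  have uu: "inner u u \<noteq> 0" using u by simp
  have xp: "inner (x - p) u = 0" unfolding p_def using uu
    by (simp add: inner_diff_left inner_add_left)
  have key: "norm (x - p) \<le> dist x y" if yL: "y \<in> {c + s *\<^sub>R u | s. True}" for y
  proof -
    obtain s where y: "y = c + s *\<^sub>R u" using yL by blast
    define k where "k = (inner (x - c) u) / inner u u"
    have "p - y = (k - s) *\<^sub>R u" unfolding p_def y k_def by (simp add: algebra_simps)
    then have o: "inner (x - p) (p - y) = 0" using xp by simp
    have o2: "inner (p - y) (x - p) = 0" by (subst inner_commute) (rule o)
    have "(norm (x - y))^2 = (norm ((x - p) + (p - y)))^2" by simp
    also have "\<dots> = (norm (x - p))^2 + (norm (p - y))^2"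
      unfolding power2_norm_eq_inner inner_add_left inner_add_right using o o2 by linarith
    finally have "(norm (x - y))^2 = (norm (x - p))^2 + (norm (p - y))^2" .
    then have "(norm (x - p))^2 \<le> (norm (x - y))^2" using zero_le_power2[of "norm (p - y)"] by linarith
    then show ?thesis unfolding dist_norm by (rule power2_le_imp_le) simp
  qed
  have ne: "{c + s *\<^sub>R u | s. True} \<noteq> {}" by blast
  show "norm (x - p) \<le> infdist x {c + s *\<^sub>R u | s. True}"
    unfolding infdist_notempty[OF ne] by (rule cINF_greatest[OF ne key])
qed

lemma pedal_line:
  fixes x q c u :: "real^2"
  assumes u: "u \<noteq> 0" and q: "q \<in> {c + s *\<^sub>R u | s. True}"
    and m: "\<forall>y\<in>{c + s *\<^sub>R u | s. True}. (norm (x - q))^2 \<le> (norm (x - y))^2"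
  shows "pedal_point x {c + s *\<^sub>R u | s. True} q"
proof -
  obtain s0 where q0: "q = c + s0 *\<^sub>R u" using q by blast
  define d where "d = inner (x - q) u"
  define t where "t = d / inner u u"
  have uu: "inner u u > 0" using u by simp
  have "q + t *\<^sub>R u = c + (s0 + t) *\<^sub>R u" using q0 by (simp add: algebra_simps)
  then have "q + t *\<^sub>R u \<in> {c + s *\<^sub>R u | s. True}" using in_line by metis
  then have "(norm (x - q))^2 \<le> (norm (x - (q + t *\<^sub>R u)))^2" using m by blast
  also have "x - (q + t *\<^sub>R u) = (x - q) - t *\<^sub>R u" by (simp add: algebra_simps)
  also have "(norm ((x - q) - t *\<^sub>R u))^2 = (norm (x - q))^2 - 2 * t * d + t^2 * inner u u"
    unfolding d_def nsq2 inn2 by (simp add: power2_eq_square algebra_simps)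
  finally have "0 \<le> - 2 * t * d + t^2 * inner u u" by simp
  also have "\<dots> = -(d^2) / inner u u" unfolding t_def using uu by (simp add: field_simps power2_eq_square)
  finally have "d^2 \<le> 0" using uu by (simp add: divide_le_0_iff)
  then have d0: "d = 0" by simp
  show ?thesis unfolding pedal_point_def
  proof (intro conjI ballI)
    show "q \<in> {c + s *\<^sub>R u | s. True}" by fact
    fix y assume "y \<in> {c + s *\<^sub>R u | s. True}"
    then obtain s where "y = c + s *\<^sub>R u" by blast
    then have "y - q = (s - s0) *\<^sub>R u" using q0 by (simp add: algebra_simps)
    then show "inner (x - q) (y - q) = 0" using d0 d_def by simp
  qed
qed

lemma mean_le:
  fixes w4 w5 w6 :: "real^2"
  defines "v \<equiv> (1/3) *\<^sub>R (w4 + w5 + w6)"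
  shows "(norm (w4 - v))^2 + (norm (w5 - v))^2 + (norm (w6 - v))^2 \<le> (norm w4)^2 + (norm w5)^2 + (norm w6)^2"
    and "(w4 - v) + (w5 - v) + (w6 - v) = 0"
proof -
  show "(w4 - v) + (w5 - v) + (w6 - v) = 0" unfolding v_def by (simp add: vec_eq_iff forall_2 algebra_simps)
  have "(norm w4)^2 + (norm w5)^2 + (norm w6)^2 - ((norm (w4 - v))^2 + (norm (w5 - v))^2 + (norm (w6 - v))^2)
     = 3 * (norm v)^2"
    unfolding nsq2 v_def by (simp add: algebra_simps power2_eq_square)
  then show "(norm (w4 - v))^2 + (norm (w5 - v))^2 + (norm (w6 - v))^2 \<le> (norm w4)^2 + (norm w5)^2 + (norm w6)^2"
    by (smt (verit) zero_le_power2)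
qed

definition fQ :: "real \<Rightarrow> real \<Rightarrow> config \<Rightarrow> config \<Rightarrow> real" where
  "fQ \<alpha> \<beta> K K' = \<alpha> * ((norm (K 4 - K' 4))^2 + (norm (K 5 - K' 5))^2 + (norm (K 6 - K' 6))^2)
     + \<beta> * (norm ((K 4 - K' 4) + (K 5 - K' 5) + (K 6 - K' 6)))^2"

lemma core:
  fixes K K' :: config and \<alpha> \<beta> :: real
  assumes a: "\<alpha> > 0" and b: "\<beta> \<ge> 0" and cp: "C_P K' = 0"
    and mn: "\<forall>K''. C_P K'' = 0 \<longrightarrow> fQ \<alpha> \<beta> K K' \<le> fQ \<alpha> \<beta> K K''"
  shows "\<exists>L. regression_line K L \<and> (\<forall>j\<in>{4,5,6}. pedal_point (K j) L (K' j))"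
proof -
  obtain c u where u: "u \<noteq> 0" and mem: "\<forall>j\<in>{4,5,6::nat}. K' j \<in> {c + s *\<^sub>R u | s. True}"
    using CP_line[OF cp] by blast
  define L where "L = {c + s *\<^sub>R u | s. True}"
  define E where "E = (norm (K 4 - K' 4))^2 + (norm (K 5 - K' 5))^2 + (norm (K 6 - K' 6))^2"
  have lowf: "\<alpha> * E \<le> fQ \<alpha> \<beta> K K'" unfolding fQ_def E_def using b by simp
  have upper: "E \<le> (infdist (K 4) {c2 + s *\<^sub>R u2 | s. True})^2 + (infdist (K 5) {c2 + s *\<^sub>R u2 | s. True})^2
      + (infdist (K 6) {c2 + s *\<^sub>R u2 | s. True})^2" if u2: "u2 \<noteq> 0" for c2 u2
  proof -
    define p where "p = (\<lambda>j. c2 + ((inner (K j - c2) u2) / inner u2 u2) *\<^sub>R u2)"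
    define v where "v = (1/3) *\<^sub>R ((K 4 - p 4) + (K 5 - p 5) + (K 6 - p 6))"
    define K'' where "K'' = (\<lambda>j. p j + v)"
    have "C_P K'' = 0"
      by (rule collinear_CP[of _ "c2 + v" "(inner (K 4 - c2) u2) / inner u2 u2" u2
            "(inner (K 5 - c2) u2) / inner u2 u2" "(inner (K 6 - c2) u2) / inner u2 u2"])
         (simp_all add: K''_def p_def algebra_simps)
    then have f1: "fQ \<alpha> \<beta> K K' \<le> fQ \<alpha> \<beta> K K''" using mn by blast
    have ew: "K j - K'' j = (K j - p j) - v" for j unfolding K''_def by (simp add: algebra_simps)
    have f2: "fQ \<alpha> \<beta> K K'' \<le> \<alpha> * ((norm (K 4 - p 4))^2 + (norm (K 5 - p 5))^2 + (norm (K 6 - p 6))^2)"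
      unfolding fQ_def ew using mean_le[of "K 4 - p 4" "K 5 - p 5" "K 6 - p 6"] a unfolding v_def by simp
    have pj: "(norm (K j - p j))^2 \<le> (infdist (K j) {c2 + s *\<^sub>R u2 | s. True})^2" for j
      using proj_line(2)[OF u2, of "K j" c2] unfolding p_def by (intro power_mono) simp_all
    have "\<alpha> * E \<le> \<alpha> * ((infdist (K 4) {c2 + s *\<^sub>R u2 | s. True})^2 + (infdist (K 5) {c2 + s *\<^sub>R u2 | s. True})^2
      + (infdist (K 6) {c2 + s *\<^sub>R u2 | s. True})^2)"
      using lowf f1 f2 pj[of 4] pj[of 5] pj[of 6] a by (smt (verit) mult_left_mono)
    then show ?thesis using a by simp
  qed
  have id: "(infdist (K j) L)^2 \<le> (norm (K j - K' j))^2" if "j \<in> {4,5,6}" for j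
    using infdist_le[of "K' j" L "K j"] mem that unfolding L_def dist_norm
    by (intro power_mono) (auto simp: infdist_nonneg)
  have E_le: "E \<le> (infdist (K 4) L)^2 + (infdist (K 5) L)^2 + (infdist (K 6) L)^2"
    using upper[OF u] unfolding L_def by simp
  have reg: "regression_line K L"
    unfolding regression_line_def
  proof (intro conjI allI impI)
    show "is_line L" unfolding is_line_def L_def using u by blast
    fix L2 assume "is_line L2"
    then obtain c2 u2 where u2: "u2 \<noteq> 0" and L2: "L2 = {c2 + s *\<^sub>R u2 | s. True}" unfolding is_line_def by blast
    have "(\<Sum>j\<in>{4,5,6::nat}. (infdist (K j) L)^2) \<le> E"
      using id[of 4] id[of 5] id[of 6] unfolding E_def by simp
    also have "E \<le> (\<Sum>j\<in>{4,5,6::nat}. (infdist (K j) L2)^2)"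
      using upper[OF u2, of c2] unfolding L2 by (simp add: add.assoc)
    finally show "(\<Sum>j\<in>{4,5,6::nat}. (infdist (K j) L)^2) \<le> (\<Sum>j\<in>{4,5,6::nat}. (infdist (K j) L2)^2)" .
  qed
  have eqj: "(norm (K j - K' j))^2 \<le> (infdist (K j) L)^2" if "j \<in> {4,5,6}" for j
    using id[of 4] id[of 5] id[of 6] E_le that unfolding E_def by auto
  have ped: "pedal_point (K j) L (K' j)" if j: "j \<in> {4,5,6}" for j
    unfolding L_def
  proof (rule pedal_line[OF u])
    show "K' j \<in> {c + s *\<^sub>R u | s. True}" using mem j by blast
    show "\<forall>y\<in>{c + s *\<^sub>R u | s. True}. (norm (K j - K' j))^2 \<le> (norm (K j - y))^2"
    proof
      fix y assume y: "y \<in> {c + s *\<^sub>R u | s. True}"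
      have "infdist (K j) L \<le> norm (K j - y)" using infdist_le[of y L "K j"] y unfolding L_def dist_norm by simp
      then have "(infdist (K j) L)^2 \<le> (norm (K j - y))^2" by (intro power_mono) (simp_all add: infdist_nonneg)
      then show "(norm (K j - K' j))^2 \<le> (norm (K j - y))^2" using eqj[OF j] by linarith
    qed
  qed
  show ?thesis using reg ped by blast
qed

lemma full_idv:
  fixes e1 e2 e3 e4 e5 e6 :: "real^2"
  shows "(1/7)*((1/3)*((norm e1)^2 + (norm e4)^2 + inner e1 e4) + (1/3)*((norm e2)^2 + (norm e5)^2 + inner e2 e5) + (1/3)*((norm e3)^2 + (norm e6)^2 + inner e3 e6)
     + (1/3)*((norm e4)^2 + (norm e5)^2 + inner e4 e5) + (1/3)*((norm e4)^2 + (norm e6)^2 + inner e4 e6) + (1/3)*((norm e5)^2 + (norm e6)^2 + inner e5 e6)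
     + (1/6)*((norm e1)^2 + (norm e2)^2 + (norm e3)^2 + inner e1 e3 + inner e1 e2 + inner e3 e2))
   = (23/210)*((norm e4)^2+(norm e5)^2+(norm e6)^2) + (1/40)*(norm (e4+e5+e6))^2
     + (5/84)*((norm (e1 + (2/5) *\<^sub>R e4 - (1/20) *\<^sub>R (e4+e5+e6)))^2 + (norm (e2 + (2/5) *\<^sub>R e5 - (1/20) *\<^sub>R (e4+e5+e6)))^2 + (norm (e3 + (2/5) *\<^sub>R e6 - (1/20) *\<^sub>R (e4+e5+e6)))^2)
     + (1/84)*(norm ((e1 + (2/5) *\<^sub>R e4 - (1/20) *\<^sub>R (e4+e5+e6)) + (e2 + (2/5) *\<^sub>R e5 - (1/20) *\<^sub>R (e4+e5+e6)) + (e3 + (2/5) *\<^sub>R e6 - (1/20) *\<^sub>R (e4+e5+e6))))^2"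
  unfolding nsq2 inn2 by (simp add: power2_eq_square field_simps)

lemma tt_idv:
  fixes e1 e2 e3 e4 e5 e6 :: "real^2"
  shows "(1/9)*((1/3)*((norm e1)^2 + (norm e2)^2 + inner e1 e2) + (1/3)*((norm e2)^2 + (norm e3)^2 + inner e2 e3) + (1/3)*((norm e1)^2 + (norm e3)^2 + inner e1 e3)
     + (1/3)*((norm e1)^2 + (norm e4)^2 + inner e1 e4) + (1/3)*((norm e2)^2 + (norm e5)^2 + inner e2 e5) + (1/3)*((norm e3)^2 + (norm e6)^2 + inner e3 e6)
     + (1/3)*((norm e4)^2 + (norm e5)^2 + inner e4 e5) + (1/3)*((norm e5)^2 + (norm e6)^2 + inner e5 e6) + (1/3)*((norm e4)^2 + (norm e6)^2 + inner e4 e6))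
   = (4/45)*((norm e4)^2+(norm e5)^2+(norm e6)^2) + (41/2160)*(norm (e4+e5+e6))^2
     + (5/54)*((norm (e1 + (1/5) *\<^sub>R e4 - (1/40) *\<^sub>R (e4+e5+e6)))^2 + (norm (e2 + (1/5) *\<^sub>R e5 - (1/40) *\<^sub>R (e4+e5+e6)))^2 + (norm (e3 + (1/5) *\<^sub>R e6 - (1/40) *\<^sub>R (e4+e5+e6)))^2)
     + (1/54)*(norm ((e1 + (1/5) *\<^sub>R e4 - (1/40) *\<^sub>R (e4+e5+e6)) + (e2 + (1/5) *\<^sub>R e5 - (1/40) *\<^sub>R (e4+e5+e6)) + (e3 + (1/5) *\<^sub>R e6 - (1/40) *\<^sub>R (e4+e5+e6))))^2"
  unfolding nsq2 inn2 by (simp add: power2_eq_square field_simps)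

lemma pos_seg: "0 \<le> (norm (a::real^2))^2 + (norm b)^2 + inner a b"
proof -
  have "(norm a)^2 + (norm b)^2 + inner a b = (1/2)*((a$1+b$1)^2 + (a$1)^2 + (b$1)^2 + (a$2+b$2)^2 + (a$2)^2 + (b$2)^2)" (is "_ = ?R")
    unfolding nsq2 inn2 by (simp add: power2_eq_square field_simps)
  moreover have "0 \<le> ?R" by simp
  ultimately show ?thesis by linarith
qed

lemma pos_tri: "0 \<le> (norm (a::real^2))^2 + (norm b)^2 + (norm c)^2 + inner a c + inner a b + inner c b"
proof -
  have "(norm a)^2 + (norm b)^2 + (norm c)^2 + inner a c + inner a b + inner c b
     = (1/2)*((a$1+b$1+c$1)^2 + (a$1)^2 + (b$1)^2 + (c$1)^2 + (a$2+b$2+c$2)^2 + (a$2)^2 + (b$2)^2 + (c$2)^2)" (is "_ = ?R")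
    unfolding nsq2 inn2 by (simp add: power2_eq_square field_simps)
  moreover have "0 \<le> ?R" by simp
  ultimately show ?thesis by linarith
qed

lemma seg_sq: "(seg_dist K K' i j)^2 = (1/3)*((norm (K i - K' i))^2 + (norm (K j - K' j))^2 + inner (K i - K' i) (K j - K' j))"
  unfolding seg_dist_def using pos_seg[of "K i - K' i" "K j - K' j"] by simp

lemma tri_sq: "(tri_dist K K' i j k)^2 = (1/6)*((norm (K i - K' i))^2 + (norm (K j - K' j))^2 + (norm (K k - K' k))^2
      + inner (K i - K' i) (K k - K' k) + inner (K i - K' i) (K j - K' j) + inner (K k - K' k) (K j - K' j))"
  unfolding tri_dist_def using pos_tri[of "K i - K' i" "K j - K' j" "K k - K' k"] by simp

lemma Dfull_sq: "(D_tri_full K K')^2 = (1/7) * ((seg_dist K K' 1 4)^2 + (seg_dist K K' 2 5)^2 + (seg_dist K K' 3 6)^2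
   + (seg_dist K K' 4 5)^2 + (seg_dist K K' 4 6)^2 + (seg_dist K K' 5 6)^2 + (tri_dist K K' 1 2 3)^2)"
proof -
  have "(\<Sum>(i,j)\<in>I2. (seg_dist K K' i j)^2) = (seg_dist K K' 1 4)^2 + (seg_dist K K' 2 5)^2 + (seg_dist K K' 3 6)^2
   + (seg_dist K K' 4 5)^2 + (seg_dist K K' 4 6)^2 + (seg_dist K K' 5 6)^2"
    by (simp add: I2_def)
  moreover have "0 \<le> (\<Sum>(i,j)\<in>I2. (seg_dist K K' i j)^2) + (tri_dist K K' 1 2 3)^2"
    by (intro add_nonneg_nonneg sum_nonneg) auto
  ultimately show ?thesis unfolding D_tri_full_def by simp
qed

lemma Dtt_sq: "(D_tri_tri K K')^2 = (1/9) * ((seg_dist K K' 1 2)^2 + (seg_dist K K' 2 3)^2 + (seg_dist K K' 1 3)^2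
   + (seg_dist K K' 1 4)^2 + (seg_dist K K' 2 5)^2 + (seg_dist K K' 3 6)^2
   + (seg_dist K K' 4 5)^2 + (seg_dist K K' 5 6)^2 + (seg_dist K K' 4 6)^2)"
proof -
  have "(\<Sum>(i,j)\<in>I4. (seg_dist K K' i j)^2) = (seg_dist K K' 1 2)^2 + (seg_dist K K' 2 3)^2 + (seg_dist K K' 1 3)^2
   + (seg_dist K K' 1 4)^2 + (seg_dist K K' 2 5)^2 + (seg_dist K K' 3 6)^2
   + (seg_dist K K' 4 5)^2 + (seg_dist K K' 5 6)^2 + (seg_dist K K' 4 6)^2"
    by (simp add: I4_def)
  moreover have "0 \<le> (\<Sum>(i,j)\<in>I4. (seg_dist K K' i j)^2)"
    by (intro sum_nonneg) auto
  ultimately show ?thesis unfolding D_tri_tri_def by simp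
qed



lemma fQ_cong: "(\<forall>j\<in>{4,5,6::nat}. K1 j = K2 j) \<Longrightarrow> fQ a b K K1 = fQ a b K K2"
  unfolding fQ_def by simp

lemma CP_cong: "(\<forall>j\<in>{4,5,6::nat}. K1 j = K2 j) \<Longrightarrow> C_P K1 = C_P K2"
  unfolding C_P_def by simp

lemma full_low: "fQ (23/210) (1/40) K K' \<le> (D_tri_full K K')^2"
  unfolding Dfull_sq seg_sq tri_sq full_idv fQ_def by simp

lemma full_cand: "\<exists>K''. (\<forall>j\<in>{4,5,6::nat}. K'' j = K' j) \<and> (D_tri_full K K'')^2 = fQ (23/210) (1/40) K K''"
proof -
  define S where "S = (K 4 - K' 4) + (K 5 - K' 5) + (K 6 - K' 6)"
  define K'' where "K'' = (\<lambda>i::nat. if i = 1 then K 1 + (2/5) *\<^sub>R (K 4 - K' 4) - (1/20) *\<^sub>R S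
     else if i = 2 then K 2 + (2/5) *\<^sub>R (K 5 - K' 5) - (1/20) *\<^sub>R S
     else if i = 3 then K 3 + (2/5) *\<^sub>R (K 6 - K' 6) - (1/20) *\<^sub>R S else K' i)"
  have ag: "\<forall>j\<in>{4,5,6::nat}. K'' j = K' j" unfolding K''_def by simp
  have "(D_tri_full K K'')^2 = fQ (23/210) (1/40) K K''"
    unfolding Dfull_sq seg_sq tri_sq full_idv fQ_def unfolding K''_def S_def by simp
  then show ?thesis using ag by blast
qed

lemma tt_low: "fQ (4/45) (41/2160) K K' \<le> (D_tri_tri K K')^2"
  unfolding Dtt_sq seg_sq tt_idv fQ_def by simp

lemma tt_cand: "\<exists>K''. (\<forall>j\<in>{4,5,6::nat}. K'' j = K' j) \<and> (D_tri_tri K K'')^2 = fQ (4/45) (41/2160) K K''"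
proof -
  define S where "S = (K 4 - K' 4) + (K 5 - K' 5) + (K 6 - K' 6)"
  define K'' where "K'' = (\<lambda>i::nat. if i = 1 then K 1 + (1/5) *\<^sub>R (K 4 - K' 4) - (1/40) *\<^sub>R S
     else if i = 2 then K 2 + (1/5) *\<^sub>R (K 5 - K' 5) - (1/40) *\<^sub>R S
     else if i = 3 then K 3 + (1/5) *\<^sub>R (K 6 - K' 6) - (1/40) *\<^sub>R S else K' i)"
  have ag: "\<forall>j\<in>{4,5,6::nat}. K'' j = K' j" unfolding K''_def by simp
  have "(D_tri_tri K K'')^2 = fQ (4/45) (41/2160) K K''"
    unfolding Dtt_sq seg_sq tt_idv fQ_def unfolding K''_def S_def by simp
  then show ?thesis using ag by blast
qed

lemma part1_gen:
  fixes D :: "config \<Rightarrow> config \<Rightarrow> real"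
  assumes a: "\<alpha> > 0" and b: "\<beta> \<ge> 0" and nn: "\<And>K'. D K K' \<ge> 0"
    and low: "\<And>K'. fQ \<alpha> \<beta> K K' \<le> (D K K')^2"
    and cand: "\<And>K'. \<exists>K''. (\<forall>j\<in>{4,5,6::nat}. K'' j = K' j) \<and> (D K K'')^2 = fQ \<alpha> \<beta> K K''"
  shows "\<forall>K'. C_P K' = 0 \<and> (\<forall>K''. C_P K'' = 0 \<longrightarrow> D K K' \<le> D K K'')
            \<longrightarrow> (\<exists>L. regression_line K L \<and> (\<forall>j\<in>{4,5,6}. pedal_point (K j) L (K' j)))"
proof (intro allI impI, elim conjE)
  fix K' assume cp: "C_P K' = 0" and mn: "\<forall>K''. C_P K'' = 0 \<longrightarrow> D K K' \<le> D K K''"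
  have "\<forall>K''. C_P K'' = 0 \<longrightarrow> fQ \<alpha> \<beta> K K' \<le> fQ \<alpha> \<beta> K K''"
  proof (intro allI impI)
    fix K'' assume c2: "C_P K'' = 0"
    obtain K3 where ag: "\<forall>j\<in>{4,5,6::nat}. K3 j = K'' j" and e3: "(D K K3)^2 = fQ \<alpha> \<beta> K K3"
      using cand by blast
    have "C_P K3 = 0" using CP_cong[OF ag] c2 by simp
    then have "D K K' \<le> D K K3" using mn by blast
    then have "(D K K')^2 \<le> (D K K3)^2" using nn by (intro power_mono) auto
    then show "fQ \<alpha> \<beta> K K' \<le> fQ \<alpha> \<beta> K K''" using low[of K'] e3 fQ_cong[OF ag, of \<alpha> \<beta> K] by linarith
  qed
  then show "\<exists>L. regression_line K L \<and> (\<forall>j\<in>{4,5,6}. pedal_point (K j) L (K' j))"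
    using core[OF a b cp] by blast
qed



lemma orth_inner:
  fixes Q :: "real^2^2"
  assumes "orthogonal_matrix Q"
  shows "inner (Q *v x) (Q *v y) = inner x y"
  using assms orthogonal_transformation_matrix[of "\<lambda>x. Q *v x"]
  by (simp add: orthogonal_transformation_def matrix_vector_mul_linear matrix_of_matrix_vector_mul)

lemma orth_norm:
  fixes Q :: "real^2^2"
  assumes "orthogonal_matrix Q"
  shows "norm (Q *v x) = norm x"
  using orth_inner[OF assms, of x x] by (simp add: norm_eq_sqrt_inner)

lemma CP_lin:
  fixes Q :: "real^2^2"
  shows "C_P (\<lambda>j. Q *v K j + w) = det Q * C_P K"
  unfolding C_P_def det_2 by (simp add: matrix_vector_mult_def sum_2 algebra_simps)

lemma rot_dist:
  fixes Q :: "real^2^2"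
  assumes Q: "orthogonal_matrix Q" and e: "\<And>i. K2 i - K'' i = Q *v (K i - K' i)"
  shows "seg_dist K2 K'' i j = seg_dist K K' i j" "tri_dist K2 K'' i j k = tri_dist K K' i j k"
  unfolding seg_dist_def tri_dist_def e orth_norm[OF Q] orth_inner[OF Q] by simp_all

lemma rot_D:
  fixes Q :: "real^2^2"
  assumes Q: "orthogonal_matrix Q" and e: "\<And>i. K2 i - K'' i = Q *v (K i - K' i)"
  shows "D_tri_full K2 K'' = D_tri_full K K'" "D_tri_tri K2 K'' = D_tri_tri K K'"
  unfolding D_tri_full_def D_tri_tri_def rot_dist[OF Q e] by simp_all

lemma part2_sub:
  assumes R: "R \<in> SO2" and R2: "R2 \<in> SO2" and D: "D = D_tri_full \<or> D = D_tri_tri"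
  shows "{D (pose_config b p R t) K' | K'. C_P K' = 0} \<subseteq> {D (pose_config b p R2 t2) K' | K'. C_P K' = 0}"
proof
  fix x assume "x \<in> {D (pose_config b p R t) K' | K'. C_P K' = 0}"
  then obtain K' where x: "x = D (pose_config b p R t) K'" and cp: "C_P K' = 0" by blast
  define K where "K = pose_config b p R t"
  define K2 where "K2 = pose_config b p R2 t2"
  define Q where "Q = R2 ** transpose R"
  define K'' where "K'' = (\<lambda>i. K2 i - Q *v (K i - K' i))"
  have oR: "orthogonal_matrix R" "det R = 1" and oR2: "orthogonal_matrix R2" "det R2 = 1"
    using R R2 unfolding SO2_def by auto
  have Q: "orthogonal_matrix Q" unfolding Q_def using oR oR2 by (simp add: orthogonal_matrix_mul)
  have dQ: "det Q = 1" unfolding Q_def using oR oR2 by (simp add: det_mul)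
  have QR: "Q ** R = R2" unfolding Q_def using oR(1)
    by (metis matrix_mul_assoc matrix_mul_rid orthogonal_matrix)
  have e: "\<And>i. K2 i - K'' i = Q *v (K i - K' i)" unfolding K''_def by simp
  have DD: "D K2 K'' = D K K'" using D rot_D[OF Q e] by auto
  have ag: "\<forall>j\<in>{4,5,6::nat}. K'' j = Q *v K' j + (t2 - Q *v t)"
  proof
    fix j :: nat assume "j \<in> {4,5,6}"
    then have "K j = R *v p j + t" "K2 j = R2 *v p j + t2" unfolding K_def K2_def pose_config_def by auto
    then show "K'' j = Q *v K' j + (t2 - Q *v t)" unfolding K''_def
      by (simp add: matrix_vector_right_distrib matrix_vector_mult_diff_distrib matrix_vector_mul_assoc QR algebra_simps)
  qed
  have "C_P K'' = C_P (\<lambda>j. Q *v K' j + (t2 - Q *v t))" using CP_cong[OF ag] .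
  also have "\<dots> = 0" unfolding CP_lin dQ cp by simp
  finally have "C_P K'' = 0" .
  then show "x \<in> {D (pose_config b p R2 t2) K' | K'. C_P K' = 0}"
    using DD x unfolding K_def K2_def by (metis (mono_tags, lifting) mem_Collect_eq)
qed


lemma Dfull_nn: "0 \<le> D_tri_full K K'"
  unfolding D_tri_full_def by (intro real_sqrt_ge_zero mult_nonneg_nonneg add_nonneg_nonneg sum_nonneg) auto

lemma Dtt_nn: "0 \<le> D_tri_tri K K'"
  unfolding D_tri_tri_def by (intro real_sqrt_ge_zero mult_nonneg_nonneg sum_nonneg) auto

theorem theorem1:
  fixes b p :: config and R :: "real^2^2" and t :: "real^2"
    and D :: "config \<Rightarrow> config \<Rightarrow> real"
  assumes R: "R \<in> SO2"
    and D: "D = D_tri_full \<or> D = D_tri_tri"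
  shows "(\<forall>K'. C_P K' = 0 \<and> (\<forall>K''. C_P K'' = 0 \<longrightarrow> D (pose_config b p R t) K' \<le> D (pose_config b p R t) K'')
            \<longrightarrow> (\<exists>L. regression_line (pose_config b p R t) L \<and>
                     (\<forall>j\<in>{4,5,6}. pedal_point (pose_config b p R t j) L (K' j))))
       \<and> (\<forall>R2 t2. R2 \<in> SO2 \<longrightarrow>
            Inf {D (pose_config b p R t) K' | K'. C_P K' = 0}
            = Inf {D (pose_config b p R2 t2) K' | K'. C_P K' = 0})"
proof
  show "\<forall>K'. C_P K' = 0 \<and> (\<forall>K''. C_P K'' = 0 \<longrightarrow> D (pose_config b p R t) K' \<le> D (pose_config b p R t) K'')
            \<longrightarrow> (\<exists>L. regression_line (pose_config b p R t) L \<and>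
                     (\<forall>j\<in>{4,5,6}. pedal_point (pose_config b p R t j) L (K' j)))"
    using D
  proof
    assume dd: "D = D_tri_full"
    show ?thesis unfolding dd
      by (rule part1_gen[where \<alpha> = "23/210" and \<beta> = "1/40", OF _ _ Dfull_nn full_low full_cand]) simp_all
  next
    assume dd: "D = D_tri_tri"
    show ?thesis unfolding dd
      by (rule part1_gen[where \<alpha> = "4/45" and \<beta> = "41/2160", OF _ _ Dtt_nn tt_low tt_cand]) simp_all
  qed
  show "\<forall>R2 t2. R2 \<in> SO2 \<longrightarrow>
            Inf {D (pose_config b p R t) K' | K'. C_P K' = 0}
            = Inf {D (pose_config b p R2 t2) K' | K'. C_P K' = 0}"
  proof (intro allI impI)
    fix R2 t2 assume R2: "R2 \<in> SO2"
    have "{D (pose_config b p R t) K' | K'. C_P K' = 0} = {D (pose_config b p R2 t2) K' | K'. C_P K' = 0}"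
      using part2_sub[OF R R2 D, of b p t t2] part2_sub[OF R2 R D, of b p t2 t] by (rule subset_antisym)
    then show "Inf {D (pose_config b p R t) K' | K'. C_P K' = 0}
            = Inf {D (pose_config b p R2 t2) K' | K'. C_P K' = 0}" by simp
  qed
qed

end
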